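(* Let $\Gamma$ be a finite connected graph, let $\emptyset\ne Y\subset Z$ be subsets of its vertex set, and let $s$ be a nonnegative integer-valued function on the vertices. Let $H_w(s,Y)$ be the expected number of particles stopping in $Y$ if $s(x)$ particles start at each vertex $x$ and perform independent simple random walks stopped on first hitting $Z$, and let $H_r(s,Y)$ be the number of particles stopping in $Y$ if instead they perform rotor-router walks (one at a time, rotors not reset) stopped on first hitting $Z$. Let $H(x)=H_w(1_x,Y)$. Then $$|H_r(s,Y)-H_w(s,Y)|\le\sum_{u}\sum_{v\sim u}|H(u)-H(v)|,$$ independently of $s$, of the initial rotor configuration, and of the cyclic orderings.
   Context: Rotor-router walk on $\Gamma$: each vertex has a fixed cyclic ordering of its neighbors and a rotor pointing to one of them; a particle at $u$ advances the rotor at $u$ to the next neighbor in the cyclic order and then moves to that neighbor. The outer sum is over all vertices $u$ of $\Gamma$ and the inner sum over neighbors $v$ of $u$. *)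

theory Defs
  imports Complex_Main
begin

definition finite_graph :: "'a set \<Rightarrow> ('a \<Rightarrow> 'a \<Rightarrow> bool) \<Rightarrow> bool" where
  "finite_graph V E \<longleftrightarrow> finite V \<and> (\<forall>u v. E u v \<longrightarrow> u \<in> V \<and> v \<in> V)
     \<and> (\<forall>u v. E u v \<longrightarrow> E v u) \<and> (\<forall>u. \<not> E u u)"

definition connected_graph :: "'a set \<Rightarrow> ('a \<Rightarrow> 'a \<Rightarrow> bool) \<Rightarrow> bool" where
  "connected_graph V E \<longleftrightarrow> (\<forall>u\<in>V. \<forall>v\<in>V. E\<^sup>*\<^sup>* u v)"

text \<open>Probability that a simple random walk started at x, stopped on first hitting Z,
  has stopped in Y within n steps.\<close>
fun hitp :: "('a \<Rightarrow> 'a \<Rightarrow> bool) \<Rightarrow> 'a set \<Rightarrow> 'a set \<Rightarrow> nat \<Rightarrow> 'a \<Rightarrow> real" where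
  "hitp E Z Y 0 x = (if x \<in> Y then 1 else 0)"
| "hitp E Z Y (Suc n) x =
     (if x \<in> Z then (if x \<in> Y then 1 else 0)
      else (\<Sum>v\<in>{v. E x v}. hitp E Z Y n v) / real (card {v. E x v}))"

definition hitprob :: "('a \<Rightarrow> 'a \<Rightarrow> bool) \<Rightarrow> 'a set \<Rightarrow> 'a set \<Rightarrow> 'a \<Rightarrow> real" where
  "hitprob E Z Y x = lim (\<lambda>n. hitp E Z Y n x)"

text \<open>H_w(s,Y): expected number of particles stopping in Y (linearity of expectation).\<close>
definition Hw :: "'a set \<Rightarrow> ('a \<Rightarrow> 'a \<Rightarrow> bool) \<Rightarrow> 'a set \<Rightarrow> 'a set \<Rightarrow> ('a \<Rightarrow> nat) \<Rightarrow> real" where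
  "Hw V E Z Y s = (\<Sum>x\<in>V. real (s x) * hitprob E Z Y x)"

text \<open>Cyclic ordering of neighbours: nbrs u lists the neighbours of u without repetition;
  successor of index i is (i+1) mod deg u.  A rotor configuration rho assigns to u an index
  rho u < length (nbrs u), i.e. the rotor points to nbrs u ! rho u.\<close>
definition cyclic_orders :: "'a set \<Rightarrow> ('a \<Rightarrow> 'a \<Rightarrow> bool) \<Rightarrow> ('a \<Rightarrow> 'a list) \<Rightarrow> bool" where
  "cyclic_orders V E nbrs \<longleftrightarrow> (\<forall>u\<in>V. distinct (nbrs u) \<and> set (nbrs u) = {v. E u v})"

definition valid_rotors :: "'a set \<Rightarrow> ('a \<Rightarrow> 'a list) \<Rightarrow> ('a \<Rightarrow> nat) \<Rightarrow> bool" where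
  "valid_rotors V nbrs rho \<longleftrightarrow> (\<forall>u\<in>V. rho u < length (nbrs u))"

inductive rwalk :: "('a \<Rightarrow> 'a list) \<Rightarrow> 'a set \<Rightarrow> ('a \<Rightarrow> nat) \<Rightarrow> 'a \<Rightarrow> 'a \<Rightarrow> ('a \<Rightarrow> nat) \<Rightarrow> bool"
  for nbrs :: "'a \<Rightarrow> 'a list" and Z :: "'a set" where
  stop: "x \<in> Z \<Longrightarrow> rwalk nbrs Z rho x x rho"
| move: "x \<notin> Z \<Longrightarrow>
     rwalk nbrs Z (rho(x := Suc (rho x) mod length (nbrs x)))
                  (nbrs x ! (Suc (rho x) mod length (nbrs x))) z rho' \<Longrightarrow>
     rwalk nbrs Z rho x z rho'"

inductive rrun :: "('a \<Rightarrow> 'a list) \<Rightarrow> 'a set \<Rightarrow> 'a set \<Rightarrow> ('a \<Rightarrow> nat) \<Rightarrow> 'a list \<Rightarrow> nat \<Rightarrow> ('a \<Rightarrow> nat) \<Rightarrow> bool"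
  for nbrs :: "'a \<Rightarrow> 'a list" and Z :: "'a set" and Y :: "'a set" where
  nil: "rrun nbrs Z Y rho [] 0 rho"
| cons: "rwalk nbrs Z rho x z rho1 \<Longrightarrow> rrun nbrs Z Y rho1 xs c rho2 \<Longrightarrow>
     rrun nbrs Z Y rho (x # xs) (c + (if z \<in> Y then 1 else 0)) rho2"

end

theory Submission
  imports Defs "HOL-Library.Infinite_Set"
begin


lemma hitp_nonneg: "0 \<le> hitp E Z Y n x"
  by (induction n arbitrary: x) (auto intro!: sum_nonneg divide_nonneg_nonneg)

lemma hitp_le1: "hitp E Z Y n x \<le> 1"
proof (induction n arbitrary: x)
  case (Suc n)
  have "(\<Sum>v\<in>{v. E x v}. hitp E Z Y n v) \<le> real (card {v. E x v}) * 1"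
    by (rule sum_bounded_above) (use Suc in auto)
  then show ?case by (auto simp: divide_le_eq)
qed auto

lemma hitp_mono: assumes "Y \<subseteq> Z" shows "hitp E Z Y n x \<le> hitp E Z Y (Suc n) x"
proof (induction n arbitrary: x)
  case 0
  then show ?case using assms by (auto intro!: sum_nonneg divide_nonneg_nonneg hitp_nonneg)
next
  case (Suc n)
  then show ?case by (auto intro!: sum_mono divide_right_mono)
qed

lemma hitp_conv: assumes "Y \<subseteq> Z" shows "(\<lambda>n. hitp E Z Y n x) \<longlonglongrightarrow> hitprob E Z Y x"
proof -
  have "incseq (\<lambda>n. hitp E Z Y n x)" using hitp_mono[OF assms] by (simp add: incseq_SucI)
  moreover have "bdd_above (range (\<lambda>n. hitp E Z Y n x))" by (rule bdd_aboveI[where M=1]) (auto simp: hitp_le1)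
  ultimately have "convergent (\<lambda>n. hitp E Z Y n x)" using LIMSEQ_incseq_SUP convergent_def by blast
  then show ?thesis unfolding hitprob_def by (simp add: convergent_LIMSEQ_iff)
qed

lemma hitprob_Z: assumes "x \<in> Z" shows "hitprob E Z Y x = (if x \<in> Y then 1 else 0)"
proof -
  have "hitp E Z Y n x = (if x \<in> Y then 1 else 0)" for n using assms by (cases n) auto
  then show ?thesis unfolding hitprob_def by simp
qed

lemma hitprob_harm: assumes "Y \<subseteq> Z" "x \<notin> Z" "card {v. E x v} \<noteq> 0"
  shows "hitprob E Z Y x = (\<Sum>v\<in>{v. E x v}. hitprob E Z Y v) / real (card {v. E x v})"
proof -
  have "(\<lambda>n. hitp E Z Y (Suc n) x) \<longlonglongrightarrow> hitprob E Z Y x"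
    using hitp_conv[OF assms(1)] by (rule LIMSEQ_Suc)
  moreover have "(\<lambda>n. hitp E Z Y (Suc n) x) \<longlonglongrightarrow> (\<Sum>v\<in>{v. E x v}. hitprob E Z Y v) / real (card {v. E x v})"
    using assms(2,3) by (simp, intro tendsto_intros hitp_conv[OF assms(1)], simp)
  ultimately show ?thesis using LIMSEQ_unique by blast
qed



definition psi :: "('a \<Rightarrow> 'a list) \<Rightarrow> ('a \<Rightarrow> real) \<Rightarrow> 'a \<Rightarrow> nat \<Rightarrow> real" where
  "psi nbrs H u r = (\<Sum>j<r. H u - H (nbrs u ! Suc j))"

definition Phi :: "'a set \<Rightarrow> ('a \<Rightarrow> 'a list) \<Rightarrow> ('a \<Rightarrow> real) \<Rightarrow> ('a \<Rightarrow> nat) \<Rightarrow> real" where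
  "Phi V nbrs H r = (\<Sum>u\<in>V. psi nbrs H u (r u))"

lemma sum_nth_set: assumes "distinct xs"
  shows "(\<Sum>j<length xs. g (xs!j)) = (\<Sum>v\<in>set xs. g v)"
proof -
  have "set xs = nth xs ` {..<length xs}" by (auto simp: set_conv_nth)
  moreover have "inj_on (nth xs) {..<length xs}" using assms by (simp add: inj_on_nth)
  ultimately show ?thesis by (simp add: sum.reindex)
qed

lemma harm_zero:
  assumes "distinct (nbrs x)" "set (nbrs x) = N" "H x = (\<Sum>v\<in>N. H v) / real (card N)"
    "length (nbrs x) > 0"
  shows "(\<Sum>j<length (nbrs x). H x - H (nbrs x ! j)) = 0"
proof -
  have c: "card N = length (nbrs x)" using assms(1,2) distinct_card by blast
  have "(\<Sum>j<length (nbrs x). H x - H (nbrs x ! j)) = real (length (nbrs x)) * H x - (\<Sum>v\<in>N. H v)"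
    using sum_nth_set[OF assms(1), of H] assms(2) by (simp add: sum_subtractf)
  also have "\<dots> = 0" using assms(3,4) c by simp
  finally show ?thesis .
qed

lemma psi_step:
  assumes "r < length (nbrs x)" "(\<Sum>j<length (nbrs x). H x - H (nbrs x ! j)) = 0"
  shows "psi nbrs H x (Suc r mod length (nbrs x)) = psi nbrs H x r + H x - H (nbrs x ! (Suc r mod length (nbrs x)))"
proof (cases "Suc r < length (nbrs x)")
  case True
  then show ?thesis by (simp add: psi_def)
next
  case False
  then have d: "Suc r = length (nbrs x)" using assms(1) by simp
  have "(\<Sum>j<Suc r. H x - H (nbrs x ! j)) = (H x - H (nbrs x ! 0)) + psi nbrs H x r"
    unfolding psi_def by (simp only: sum.lessThan_Suc_shift)
  then show ?thesis using assms(2) d by (simp add: psi_def)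
qed

lemma Phi_upd: assumes "finite V" "x \<in> V"
  shows "Phi V nbrs H (r(x:=a)) = Phi V nbrs H r - psi nbrs H x (r x) + psi nbrs H x a"
proof -
  have "Phi V nbrs H (r(x:=a)) = psi nbrs H x a + (\<Sum>u\<in>V-{x}. psi nbrs H u (r u))"
    unfolding Phi_def using assms by (simp add: sum.remove)
  moreover have "Phi V nbrs H r = psi nbrs H x (r x) + (\<Sum>u\<in>V-{x}. psi nbrs H u (r u))"
    unfolding Phi_def using assms by (simp add: sum.remove)
  ultimately show ?thesis by simp
qed

lemma psi_bound1: assumes "a \<le> b" "b < length (nbrs u)"
  shows "\<bar>psi nbrs H u b - psi nbrs H u a\<bar> \<le> (\<Sum>j<length (nbrs u). \<bar>H u - H (nbrs u ! j)\<bar>)"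
proof -
  let ?f = "\<lambda>j. H u - H (nbrs u ! j)"
  have "psi nbrs H u b = psi nbrs H u a + (\<Sum>j\<in>{a..<b}. ?f (Suc j))"
    unfolding psi_def using assms(1)
    by (simp add: lessThan_atLeast0 sum.atLeastLessThan_concat)
  then have "\<bar>psi nbrs H u b - psi nbrs H u a\<bar> = \<bar>\<Sum>j\<in>{a..<b}. ?f (Suc j)\<bar>" by simp
  also have "\<dots> \<le> (\<Sum>j\<in>{a..<b}. \<bar>?f (Suc j)\<bar>)" by (rule sum_abs)
  also have "\<dots> = (\<Sum>j\<in>{Suc a..<Suc b}. \<bar>?f j\<bar>)" by (simp only: sum.shift_bounds_Suc_ivl)
  also have "\<dots> \<le> (\<Sum>j<length (nbrs u). \<bar>?f j\<bar>)"
    by (rule sum_mono2) (use assms in auto)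
  finally show ?thesis .
qed

lemma psi_bound: assumes "a < length (nbrs u)" "b < length (nbrs u)"
  shows "\<bar>psi nbrs H u a - psi nbrs H u b\<bar> \<le> (\<Sum>j<length (nbrs u). \<bar>H u - H (nbrs u ! j)\<bar>)"
proof (cases "a \<le> b")
  case True then show ?thesis using psi_bound1[of a b nbrs u H] True assms by (simp add: abs_minus_commute)
next
  case False then show ?thesis using psi_bound1[of b a] assms by simp
qed



lemma walk_inv:
  assumes "rwalk nbrs Z rho x z rho'" "finite_graph V E" "cyclic_orders V E nbrs" "Y \<subseteq> Z"
    "x \<in> V" "valid_rotors V nbrs rho"
  shows "z \<in> V \<and> z \<in> Z \<and> valid_rotors V nbrs rho' \<and>
    Phi V nbrs (hitprob E Z Y) rho + hitprob E Z Y x = Phi V nbrs (hitprob E Z Y) rho' + hitprob E Z Y z"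
  using assms(1,5,6)
proof (induction rule: rwalk.induct)
  case (stop x rho)
  then show ?case by simp
next
  case (move x rho z rho')
  let ?H = "hitprob E Z Y"
  define d where "d = length (nbrs x)"
  define k where "k = Suc (rho x) mod d"
  have rx: "rho x < d" using move.prems unfolding valid_rotors_def d_def by auto
  then have d0: "d > 0" by simp
  have kd: "k < d" unfolding k_def using d0 by simp
  have dist: "distinct (nbrs x)" and sn: "set (nbrs x) = {v. E x v}"
    using assms(3) move.prems unfolding cyclic_orders_def by auto
  have finV: "finite V" and sub: "\<And>v. E x v \<Longrightarrow> v \<in> V"
    using assms(2) unfolding finite_graph_def by auto
  have nk: "nbrs x ! k \<in> V" using kd sn sub d_def by (metis mem_Collect_eq nth_mem)
  have val: "valid_rotors V nbrs (rho(x := k))"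
    using move.prems kd unfolding valid_rotors_def d_def by auto
  have IH: "z \<in> V \<and> z \<in> Z \<and> valid_rotors V nbrs rho' \<and>
    Phi V nbrs ?H (rho(x := k)) + ?H (nbrs x ! k) = Phi V nbrs ?H rho' + ?H z"
    using move.IH nk val unfolding k_def d_def by blast
  have cd: "card {v. E x v} = d" using dist sn distinct_card d_def by metis
  have harm: "?H x = (\<Sum>v\<in>{v. E x v}. ?H v) / real (card {v. E x v})"
    by (rule hitprob_harm) (use assms(4) move.hyps cd d0 in auto)
  have z0: "(\<Sum>j<length (nbrs x). ?H x - ?H (nbrs x ! j)) = 0"
    by (rule harm_zero[where H="?H" and nbrs=nbrs and x=x and N="{v. E x v}", OF dist sn harm]) (use d0 d_def in simp)
  have ps: "psi nbrs ?H x k = psi nbrs ?H x (rho x) + ?H x - ?H (nbrs x ! k)"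
    unfolding k_def d_def by (rule psi_step) (use rx z0 d_def in auto)
  have "Phi V nbrs ?H (rho(x := k)) = Phi V nbrs ?H rho - psi nbrs ?H x (rho x) + psi nbrs ?H x k"
    by (rule Phi_upd[OF finV move.prems(1)])
  then show ?case using IH ps by simp
qed

lemma run_inv:
  assumes "rrun nbrs Z Y rho xs c rho'" "finite_graph V E" "cyclic_orders V E nbrs" "Y \<subseteq> Z"
    "set xs \<subseteq> V" "valid_rotors V nbrs rho"
  shows "valid_rotors V nbrs rho' \<and>
    real c + Phi V nbrs (hitprob E Z Y) rho' = sum_list (map (hitprob E Z Y) xs) + Phi V nbrs (hitprob E Z Y) rho"
  using assms(1,5,6)
proof (induction rule: rrun.induct)
  case (nil rho)
  then show ?case by simp
next
  case (cons rho x z rho1 xs c rho2)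
  have w: "z \<in> V \<and> z \<in> Z \<and> valid_rotors V nbrs rho1 \<and>
    Phi V nbrs (hitprob E Z Y) rho + hitprob E Z Y x = Phi V nbrs (hitprob E Z Y) rho1 + hitprob E Z Y z"
    by (rule walk_inv[OF cons.hyps(1) assms(2,3,4)]) (use cons.prems in auto)
  then have "hitprob E Z Y z = (if z \<in> Y then 1 else 0)" by (simp add: hitprob_Z)
  with w cons.IH cons.prems show ?case by auto
qed

lemma sum_list_count: assumes "finite V" "set xs \<subseteq> V"
  shows "sum_list (map f xs) = (\<Sum>x\<in>V. real (count_list xs x) * f x)"
  using assms(2)
proof (induction xs)
  case Nil then show ?case by simp
next
  case (Cons a xs)
  have "(\<Sum>x\<in>V. real (count_list (a#xs) x) * f x) = (\<Sum>x\<in>V. real (count_list xs x) * f x + (if a = x then f x else 0))"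
    by (rule sum.cong) (auto simp: algebra_simps)
  also have "\<dots> = (\<Sum>x\<in>V. real (count_list xs x) * f x) + f a"
    using Cons.prems assms(1) by (simp add: sum.distrib)
  finally show ?case using Cons by simp
qed



fun cnt :: "(nat \<Rightarrow> 'a) \<Rightarrow> 'a \<Rightarrow> nat \<Rightarrow> nat" where
  "cnt p u 0 = 0"
| "cnt p u (Suc n) = cnt p u n + (if p n = u then 1 else 0)"

lemma cnt_mono: "m \<le> n \<Longrightarrow> cnt p u m \<le> cnt p u n"
  by (induction n) (auto simp: le_Suc_eq)

lemma cnt_unbounded: assumes "\<forall>N. \<exists>n\<ge>N. p n = u" shows "\<exists>n. k \<le> cnt p u n"
proof (induction k)
  case 0 then show ?case by simp
next
  case (Suc k)
  then obtain n where n: "k \<le> cnt p u n" by blast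
  obtain m where m: "m \<ge> n" "p m = u" using assms by blast
  have "cnt p u n \<le> cnt p u m" by (rule cnt_mono[OF m(1)])
  then have "Suc k \<le> cnt p u (Suc m)" using n m by simp
  then show ?case by blast
qed

lemma cnt_hit: assumes "\<forall>N. \<exists>n\<ge>N. p n = u" "cnt p u N \<le> K"
  shows "\<exists>t\<ge>N. p t = u \<and> cnt p u t = K"
proof -
  obtain n where n: "K < cnt p u n" using cnt_unbounded[OF assms(1), of "Suc K"] by (metis Suc_le_eq)
  define T where "T = (LEAST t. K < cnt p u t)"
  have T1: "K < cnt p u T" unfolding T_def using n by (rule LeastI)
  have T0: "T \<noteq> 0" using T1 by (cases T) auto
  then obtain t where t: "T = Suc t" by (cases T) auto
  have "\<not> K < cnt p u t" unfolding T_def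
    by (rule not_less_Least) (use t T_def in simp)
  then have ct: "cnt p u t = K" and pt: "p t = u" using T1 t by (auto split: if_splits)
  have "t \<ge> N"
  proof (rule ccontr)
    assume "\<not> t \<ge> N"
    then have "cnt p u (Suc t) \<le> cnt p u N" by (intro cnt_mono) simp
    then show False using T1 t assms(2) by simp
  qed
  then show ?thesis using ct pt by blast
qed

lemma key_nb:
  fixes p :: "nat \<Rightarrow> 'a"
  assumes inf: "\<forall>N. \<exists>n\<ge>N. p n = u" and d: "0 < d" and i: "i < d" and r0: "r0 < d"
    and step: "\<forall>n. p n = u \<longrightarrow> p (Suc n) = w (Suc ((r0 + cnt p u n) mod d) mod d)"
  shows "\<forall>N. \<exists>n\<ge>N. p n = w i"
proof
  fix N
  define K where "K = d * (cnt p u N + 1) + i - Suc r0"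
  have "d \<le> d * (cnt p u N + 1)" by simp
  then have dK: "d * (cnt p u N + 1) \<ge> Suc r0" using r0 by linarith
  have KN: "cnt p u N \<le> K"
  proof -
    have "cnt p u N \<le> d * cnt p u N" using d by simp
    also have "d * cnt p u N + d \<le> d * (cnt p u N + 1) + i" by simp
    then have "d * cnt p u N \<le> K" unfolding K_def using r0 by linarith
    finally show ?thesis .
  qed
  obtain t where t: "t \<ge> N" "p t = u" "cnt p u t = K" using cnt_hit[OF inf KN] by blast
  have "Suc (r0 + K) = i + d * (cnt p u N + 1)" unfolding K_def using dK by simp
  then have "Suc (r0 + K) mod d = i" using i by (metis mod_mult_self2 mod_less)
  then have "Suc ((r0 + cnt p u t) mod d) mod d = i" using t by (simp add: mod_Suc_eq)
  then have "p (Suc t) = w i" using step t by metis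
  then show "\<exists>n\<ge>N. p n = w i" using t(1) by (intro exI[of _ "Suc t"]) simp
qed



definition rstep :: "('a \<Rightarrow> 'a list) \<Rightarrow> ('a \<Rightarrow> nat) \<times> 'a \<Rightarrow> ('a \<Rightarrow> nat) \<times> 'a" where
  "rstep nbrs s = ((fst s)(snd s := Suc (fst s (snd s)) mod length (nbrs (snd s))),
      nbrs (snd s) ! (Suc (fst s (snd s)) mod length (nbrs (snd s))))"

lemma reach_walk:
  "(\<forall>m<n. snd ((rstep nbrs ^^ m) s) \<notin> Z) \<Longrightarrow> snd ((rstep nbrs ^^ n) s) \<in> Z
   \<Longrightarrow> \<exists>z r'. rwalk nbrs Z (fst s) (snd s) z r'"
proof (induction n arbitrary: s)
  case 0
  then show ?case using rwalk.stop by fastforce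
next
  case (Suc n)
  have sZ: "snd s \<notin> Z" using Suc.prems(1) by (metis funpow_0 zero_less_Suc)
  have a: "\<forall>m<n. snd ((rstep nbrs ^^ m) (rstep nbrs s)) \<notin> Z"
  proof (intro allI impI)
    fix m assume "m < n"
    then have "Suc m < Suc n" by simp
    then have "snd ((rstep nbrs ^^ Suc m) s) \<notin> Z" using Suc.prems(1) by blast
    then show "snd ((rstep nbrs ^^ m) (rstep nbrs s)) \<notin> Z" by (simp only: funpow_Suc_right o_apply not_False_eq_True)
  qed
  have b: "snd ((rstep nbrs ^^ n) (rstep nbrs s)) \<in> Z"
    using Suc.prems(2) by (simp only: funpow_Suc_right o_apply)
  obtain z r' where "rwalk nbrs Z (fst (rstep nbrs s)) (snd (rstep nbrs s)) z r'"
    using Suc.IH[OF a b] by blast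
  then have "rwalk nbrs Z (fst s) (snd s) z r'"
    by (intro rwalk.move[OF sZ]) (simp add: rstep_def)
  then show ?case by blast
qed

lemma terminates:
  assumes G: "finite_graph V E" and conn: "connected_graph V E" and cyc: "cyclic_orders V E nbrs"
    and z0: "z0 \<in> Z" "z0 \<in> V" and x: "x \<in> V" and val: "valid_rotors V nbrs rho"
  shows "\<exists>n. snd ((rstep nbrs ^^ n) (rho, x)) \<in> Z"
proof (rule ccontr)
  define st where "st n = (rstep nbrs ^^ n) (rho, x)" for n
  define pos where "pos n = snd (st n)" for n
  define rot where "rot n = fst (st n)" for n
  assume "\<not> ?thesis"
  then have nz: "\<And>n. pos n \<notin> Z" unfolding pos_def st_def by blast
  have finV: "finite V" and sub: "\<And>u v. E u v \<Longrightarrow> v \<in> V"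
    using G unfolding finite_graph_def by auto
  have stS: "st (Suc n) = rstep nbrs (st n)" for n by (simp add: st_def)
  have posS: "pos (Suc n) = nbrs (pos n) ! (Suc (rot n (pos n)) mod length (nbrs (pos n)))" for n
    unfolding pos_def rot_def stS by (simp add: rstep_def)
  have rotS: "rot (Suc n) = (rot n)(pos n := Suc (rot n (pos n)) mod length (nbrs (pos n)))" for n
    unfolding pos_def rot_def stS by (simp add: rstep_def)
  have inv: "pos n \<in> V \<and> valid_rotors V nbrs (rot n)" for n
  proof (induction n)
    case 0
    then show ?case using x val by (simp add: pos_def rot_def st_def)
  next
    case (Suc n)
    define y where "y = pos n"
    define k where "k = Suc (rot n y) mod length (nbrs y)"
    have ry: "rot n y < length (nbrs y)" using Suc unfolding valid_rotors_def y_def by auto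
    then have kd: "k < length (nbrs y)" unfolding k_def by (intro mod_less_divisor) linarith
    have sn: "set (nbrs y) = {v. E y v}" using cyc Suc unfolding cyclic_orders_def y_def by auto
    have "nbrs y ! k \<in> V" using kd sn sub by (metis mem_Collect_eq nth_mem)
    moreover have "valid_rotors V nbrs ((rot n)(y := k))"
      using Suc kd unfolding valid_rotors_def by auto
    ultimately show ?case unfolding posS rotS y_def[symmetric] k_def[symmetric] by blast
  qed
  have rotf: "u \<in> V \<Longrightarrow> rot n u = (rho u + cnt pos u n) mod length (nbrs u)" for n u
  proof (induction n)
    case 0
    then show ?case using val by (simp add: rot_def st_def valid_rotors_def)
  next
    case (Suc n)
    then show ?case by (auto simp: rotS mod_Suc_eq)
  qed
  have closed: "\<forall>N. \<exists>n\<ge>N. pos n = v" if u: "u \<in> V" "\<forall>N. \<exists>n\<ge>N. pos n = u" and e: "E u v" for u v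
  proof -
    have sn: "set (nbrs u) = {v. E u v}" using cyc u unfolding cyclic_orders_def by auto
    obtain i where i: "i < length (nbrs u)" "nbrs u ! i = v" using e sn by (metis in_set_conv_nth mem_Collect_eq)
    have r0: "rho u < length (nbrs u)" using val u unfolding valid_rotors_def by auto
    have "\<forall>N. \<exists>n\<ge>N. pos n = (\<lambda>j. nbrs u ! j) i"
    proof (rule key_nb[OF u(2) _ i(1) r0])
      show "0 < length (nbrs u)" using r0 by linarith
      show "\<forall>n. pos n = u \<longrightarrow> pos (Suc n) = nbrs u ! (Suc ((rho u + cnt pos u n) mod length (nbrs u)) mod length (nbrs u))"
        using posS rotf[OF u(1)] by auto
    qed
    then show ?thesis using i(2) by simp
  qed
  have "finite (range pos)" using inv finV by (metis finite_subset image_subset_iff)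
  then obtain u0 where u0: "u0 \<in> range pos" "infinite (pos -` {u0})"
    using inf_img_fin_dom[of pos UNIV] by auto
  have u0V: "u0 \<in> V" using u0(1) inv by auto
  have u0inf: "\<forall>N. \<exists>n\<ge>N. pos n = u0" using u0(2) unfolding infinite_nat_iff_unbounded_le by auto
  have "E\<^sup>*\<^sup>* u0 z0" using conn u0V z0(2) unfolding connected_graph_def by blast
  then have "(\<forall>N. \<exists>n\<ge>N. pos n = z0)"
  proof (induction rule: rtranclp_induct)
    case base then show ?case using u0inf by simp
  next
    case (step y z)
    have "y \<in> V" using step.hyps(1) u0V by (induction rule: rtranclp_induct) (auto intro: sub)
    then show ?case using closed step by blast
  qed
  then show False using nz z0(1) by blast
qed



lemma walk_exists:
  assumes G: "finite_graph V E" and conn: "connected_graph V E" and cyc: "cyclic_orders V E nbrs"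
    and z0: "z0 \<in> Z" "z0 \<in> V" and x: "x \<in> V" and val: "valid_rotors V nbrs rho"
  shows "\<exists>z r'. rwalk nbrs Z rho x z r'"
proof -
  let ?P = "\<lambda>n. snd ((rstep nbrs ^^ n) (rho, x)) \<in> Z"
  obtain n where n: "?P n" using terminates[OF assms] by blast
  define n0 where "n0 = (LEAST n. ?P n)"
  have "?P n0" unfolding n0_def using n by (rule LeastI)
  moreover have "\<forall>m<n0. \<not> ?P m" unfolding n0_def using not_less_Least by blast
  ultimately have "\<exists>z r'. rwalk nbrs Z (fst (rho, x)) (snd (rho, x)) z r'"
    by (intro reach_walk) auto
  then show ?thesis by simp
qed

lemma run_exists:
  assumes G: "finite_graph V E" and conn: "connected_graph V E" and cyc: "cyclic_orders V E nbrs"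
    and z0: "z0 \<in> Z" "z0 \<in> V" and YZ: "Y \<subseteq> Z"
  shows "set xs \<subseteq> V \<Longrightarrow> valid_rotors V nbrs rho \<Longrightarrow> \<exists>c r'. rrun nbrs Z Y rho xs c r'"
proof (induction xs arbitrary: rho)
  case Nil
  then show ?case using rrun.nil by blast
next
  case (Cons x xs)
  obtain z r1 where w: "rwalk nbrs Z rho x z r1"
    using walk_exists[OF G conn cyc z0, of x rho] Cons.prems by auto
  have vr: "valid_rotors V nbrs r1"
    using walk_inv[OF w G cyc YZ] Cons.prems by auto
  have "set xs \<subseteq> V" using Cons.prems by simp
  then obtain c r' where "rrun nbrs Z Y r1 xs c r'" using Cons.IH vr by blast
  then show ?case using rrun.cons[OF w] by blast
qed

theorem mainTheorem12:
  fixes V :: "'a set" and E :: "'a \<Rightarrow> 'a \<Rightarrow> bool" and Y Z :: "'a set"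
    and s :: "'a \<Rightarrow> nat" and nbrs :: "'a \<Rightarrow> 'a list" and rho :: "'a \<Rightarrow> nat"
    and xs :: "'a list"
  assumes "finite_graph V E" and "connected_graph V E"
    and "Y \<noteq> {}" and "Y \<subseteq> Z" and "Z \<subseteq> V"
    and "cyclic_orders V E nbrs" and "valid_rotors V nbrs rho"
    and "set xs \<subseteq> V" and "\<forall>x\<in>V. count_list xs x = s x"
  shows "(\<exists>c rho'. rrun nbrs Z Y rho xs c rho') \<and>
         (\<forall>c rho'. rrun nbrs Z Y rho xs c rho' \<longrightarrow>
            \<bar>real c - Hw V E Z Y s\<bar> \<le>
              (\<Sum>u\<in>V. \<Sum>v\<in>{v. E u v}. \<bar>hitprob E Z Y u - hitprob E Z Y v\<bar>))"
proof
  obtain z0 where z0: "z0 \<in> Y" using assms(3) by blast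
  then have z0Z: "z0 \<in> Z" and z0V: "z0 \<in> V" using assms(4,5) by auto
  show "\<exists>c rho'. rrun nbrs Z Y rho xs c rho'"
    by (rule run_exists[OF assms(1,2,6) z0Z z0V assms(4) assms(8,7)])
  have finV: "finite V" using assms(1) unfolding finite_graph_def by auto
  let ?H = "hitprob E Z Y"
  show "\<forall>c rho'. rrun nbrs Z Y rho xs c rho' \<longrightarrow>
            \<bar>real c - Hw V E Z Y s\<bar> \<le> (\<Sum>u\<in>V. \<Sum>v\<in>{v. E u v}. \<bar>?H u - ?H v\<bar>)"
  proof (intro allI impI)
    fix c rho' assume r: "rrun nbrs Z Y rho xs c rho'"
    have ri: "valid_rotors V nbrs rho' \<and>
      real c + Phi V nbrs ?H rho' = sum_list (map ?H xs) + Phi V nbrs ?H rho"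
      by (rule run_inv[OF r assms(1,6,4,8,7)])
    have "sum_list (map ?H xs) = (\<Sum>x\<in>V. real (count_list xs x) * ?H x)"
      by (rule sum_list_count[OF finV assms(8)])
    also have "\<dots> = Hw V E Z Y s" unfolding Hw_def using assms(9) by (intro sum.cong) auto
    finally have hw: "sum_list (map ?H xs) = Hw V E Z Y s" .
    have "\<bar>real c - Hw V E Z Y s\<bar> = \<bar>\<Sum>u\<in>V. psi nbrs ?H u (rho u) - psi nbrs ?H u (rho' u)\<bar>"
    proof -
      have "real c - Hw V E Z Y s = Phi V nbrs ?H rho - Phi V nbrs ?H rho'" using ri hw by linarith
      then show ?thesis unfolding Phi_def by (simp add: sum_subtractf)
    qed
    also have "\<dots> \<le> (\<Sum>u\<in>V. \<bar>psi nbrs ?H u (rho u) - psi nbrs ?H u (rho' u)\<bar>)" by (rule sum_abs)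
    also have "\<dots> \<le> (\<Sum>u\<in>V. \<Sum>v\<in>{v. E u v}. \<bar>?H u - ?H v\<bar>)"
    proof (rule sum_mono)
      fix u assume u: "u \<in> V"
      have a: "rho u < length (nbrs u)" "rho' u < length (nbrs u)"
        using u assms(7) ri unfolding valid_rotors_def by auto
      have dist: "distinct (nbrs u)" and sn: "set (nbrs u) = {v. E u v}"
        using assms(6) u unfolding cyclic_orders_def by auto
      have "\<bar>psi nbrs ?H u (rho u) - psi nbrs ?H u (rho' u)\<bar> \<le> (\<Sum>j<length (nbrs u). \<bar>?H u - ?H (nbrs u ! j)\<bar>)"
        by (rule psi_bound[where nbrs=nbrs and u=u, OF a])
      also have "\<dots> = (\<Sum>v\<in>{v. E u v}. \<bar>?H u - ?H v\<bar>)"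
        using sum_nth_set[OF dist, of "\<lambda>v. \<bar>?H u - ?H v\<bar>"] sn by simp
      finally show "\<bar>psi nbrs ?H u (rho u) - psi nbrs ?H u (rho' u)\<bar> \<le> (\<Sum>v\<in>{v. E u v}. \<bar>?H u - ?H v\<bar>)" .
    qed
    finally show "\<bar>real c - Hw V E Z Y s\<bar> \<le> (\<Sum>u\<in>V. \<Sum>v\<in>{v. E u v}. \<bar>?H u - ?H v\<bar>)" .
  qed
qed


end
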